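(* Let $X$ be a real Banach space, $L\geq0$, and $h:X\times X^*\to\mathbb{R}\cup\{\pm\infty\}$ a proper lower semicontinuous convex function with $h(x,x^* )\geq\langle x,x^*\rangle$ for all $(x,x^* )$, and such that $\|y^*\|\leq L$ for all $y^*\in P_1(D(h^* ))$. Then: 1. for every $x^*\in P_2(D(h))$, the function $h(\cdot,x^* )$ is $L$-Lipschitz continuous (and real-valued) on $X$; 2. $D(h)=X\times P_2(D(h))\subseteq X\times\{x^*\in X^*\;|\;\|x^*\|\leq L\}$; 3. $\|x^*\|\leq L$ for all $x^*\in P_2D(h)$, and $P_1(D(h))=X$.
   Context: $P_1,P_2$ are the canonical projections of a Cartesian product onto its factors; $D(f)=\{z\;|\;f(z)<\infty\}$; $h$ proper means $h\not\equiv+\infty$ and $h>-\infty$. The conjugate of $h$ is $h^*:X^*\times X^{**}\to\mathbb{R}\cup\{\pm\infty\}$, $h^*(x^*,x^{**})=\sup_{(y,y^* )\in X\times X^*}\langle y,x^*\rangle+\langle x^{**},y^*\rangle-h(y,y^* )$. *)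

theory Defs
  imports "HOL-Analysis.Analysis"
begin

(* Dual space X* = bounded linear functionals 'a =>L real (operator norm);
   bidual = ('a =>L real) =>L real. Extended reals = ereal. *)

definition edom :: "('b \<Rightarrow> ereal) \<Rightarrow> 'b set" where
  "edom f = {z. f z < \<infinity>}"

definition proper_fun :: "('b \<Rightarrow> ereal) \<Rightarrow> bool" where
  "proper_fun f \<longleftrightarrow> (\<exists>z. f z \<noteq> \<infinity>) \<and> (\<forall>z. f z > -\<infinity>)"

definition econvex :: "('b::real_vector \<Rightarrow> ereal) \<Rightarrow> bool" where
  "econvex f \<longleftrightarrow> convex {(z, t::real). f z \<le> ereal t}"

definition elsc :: "('b::topological_space \<Rightarrow> ereal) \<Rightarrow> bool" where
  "elsc f \<longleftrightarrow> (\<forall>t. closed {z. f z \<le> t})"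

definition fconj ::
  "('a::real_normed_vector \<times> ('a \<Rightarrow>\<^sub>L real) \<Rightarrow> ereal)
   \<Rightarrow> ('a \<Rightarrow>\<^sub>L real) \<times> (('a \<Rightarrow>\<^sub>L real) \<Rightarrow>\<^sub>L real) \<Rightarrow> ereal" where
  "fconj h = (\<lambda>(xs, xss). SUP p \<in> UNIV.
      ereal (blinfun_apply xs (fst p) + blinfun_apply xss (snd p)) - h p)"

end

theory Submission
  imports Defs
begin

definition sublin :: "('v::real_vector \<Rightarrow> real) \<Rightarrow> bool" where
  "sublin q \<longleftrightarrow> (\<forall>x y. q (x + y) \<le> q x + q y) \<and> (\<forall>c x. c > 0 \<longrightarrow> q (c *\<^sub>R x) = c * q x)"

lemma sublin_add: "sublin q \<Longrightarrow> q (x + y) \<le> q x + q y" unfolding sublin_def by blast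
lemma sublin_scale: "sublin q \<Longrightarrow> c > 0 \<Longrightarrow> q (c *\<^sub>R x) = c * q x" unfolding sublin_def by blast

lemma sublin_0: assumes "sublin q" shows "q 0 = 0"
proof -
  have "q ((2::real) *\<^sub>R 0) = 2 * q 0" by (rule sublin_scale[OF assms]) simp
  then have "q 0 = 2 * q 0" by simp
  then show ?thesis by linarith
qed

lemma sublin_neg: assumes "sublin q" shows "- q (- x) \<le> q x"
proof -
  have "q (x + - x) \<le> q x + q (-x)" using assms unfolding sublin_def by blast
  then show ?thesis using sublin_0[OF assms] by simp
qed

lemma sublin_chain_inf:
  fixes C :: "('v::real_vector \<Rightarrow> real) set"
  assumes C: "C \<noteq> {}" "\<And>q. q \<in> C \<Longrightarrow> sublin q"
    and lb: "\<And>q x. q \<in> C \<Longrightarrow> b x \<le> q x"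
    and ch: "\<And>q1 q2. q1 \<in> C \<Longrightarrow> q2 \<in> C \<Longrightarrow> (\<forall>x. q1 x \<le> q2 x) \<or> (\<forall>x. q2 x \<le> q1 x)"
  shows "sublin (\<lambda>x. INF q\<in>C. q x)" and "\<And>q x. q \<in> C \<Longrightarrow> (INF q\<in>C. q x) \<le> q x"
proof -
  have bdd: "bdd_below ((\<lambda>q. q x) ` C)" for x using lb by (auto intro!: bdd_belowI)
  show low: "(INF q\<in>C. q x) \<le> q x" if "q \<in> C" for q x using cINF_lower[OF bdd that] .
  show "sublin (\<lambda>x. INF q\<in>C. q x)" unfolding sublin_def
  proof (intro conjI allI impI)
    fix x y
    have "(INF q\<in>C. q (x + y)) - q2 y \<le> q1 x" if "q1 \<in> C" "q2 \<in> C" for q1 q2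
    proof -
      have "\<exists>q\<in>C. q x \<le> q1 x \<and> q y \<le> q2 y" using ch[OF that] that by blast
      then obtain q where q: "q \<in> C" "q x \<le> q1 x" "q y \<le> q2 y" by blast
      have "(INF q\<in>C. q (x + y)) \<le> q (x + y)" using low q(1) .
      also have "\<dots> \<le> q x + q y" using sublin_add C(2)[OF q(1)] .
      finally show ?thesis using q by simp
    qed
    then have "(INF q\<in>C. q (x + y)) - q2 y \<le> (INF q\<in>C. q x)" if "q2 \<in> C" for q2
      using that C(1) by (intro cINF_greatest) auto
    then have "(INF q\<in>C. q (x + y)) - (INF q\<in>C. q x) \<le> q2 y" if "q2 \<in> C" for q2
      using that by force
    then have "(INF q\<in>C. q (x + y)) - (INF q\<in>C. q x) \<le> (INF q\<in>C. q y)"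
      using C(1) by (intro cINF_greatest) auto
    then show "(INF q\<in>C. q (x + y)) \<le> (INF q\<in>C. q x) + (INF q\<in>C. q y)" by simp
  next
    fix c :: real and x assume c: "c > 0"
    have e: "q (c *\<^sub>R x) = c * q x" if "q \<in> C" for q using sublin_scale C(2)[OF that] c by blast
    have "(INF q\<in>C. q (c *\<^sub>R x)) / c \<le> q x" if "q \<in> C" for q
      using low[OF that, of "c *\<^sub>R x"] e[OF that] c by (simp add: field_simps)
    then have 1: "(INF q\<in>C. q (c *\<^sub>R x)) / c \<le> (INF q\<in>C. q x)" using C(1) by (intro cINF_greatest) auto
    have "c * (INF q\<in>C. q x) \<le> q (c *\<^sub>R x)" if "q \<in> C" for q
      using low[OF that, of x] e[OF that] c by simp
    then have 2: "c * (INF q\<in>C. q x) \<le> (INF q\<in>C. q (c *\<^sub>R x))" using C(1) by (intro cINF_greatest) auto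
    from 1 2 c show "(INF q\<in>C. q (c *\<^sub>R x)) = c * (INF q\<in>C. q x)" by (simp add: field_simps)
  qed
qed

lemma sublin_scale0: assumes "sublin q" "c \<ge> 0" shows "q (c *\<^sub>R x) = c * q x"
  using assms sublin_scale[OF assms(1)] sublin_0[OF assms(1)] by (cases "c = 0") auto

lemma sublin_shift:
  fixes q :: "'v::real_vector \<Rightarrow> real" and a :: 'v
  assumes q: "sublin q"
  defines "qa \<equiv> \<lambda>x. INF t\<in>{0::real..}. q (x + t *\<^sub>R a) - t * q a"
  shows "sublin qa" "\<And>x. qa x \<le> q x" "qa (- a) \<le> - q a"
proof -
  have lbq: "- q (- x) \<le> q (x + t *\<^sub>R a) - t * q a" if "t \<ge> 0" for x t
  proof -
    have "q (t *\<^sub>R a) \<le> q (x + t *\<^sub>R a) + q (- x)"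
      using sublin_add[OF q, of "x + t *\<^sub>R a" "- x"] by simp
    then show ?thesis using sublin_scale0[OF q that] by simp
  qed
  have bdd: "bdd_below ((\<lambda>t. q (x + t *\<^sub>R a) - t * q a) ` {0..})" for x
    using lbq by (auto intro!: bdd_belowI)
  have low: "qa x \<le> q (x + t *\<^sub>R a) - t * q a" if "t \<ge> 0" for x t
    unfolding qa_def using cINF_lower[OF bdd, of t x] that by simp
  have grt: "m \<le> qa x" if "\<And>t. t \<ge> 0 \<Longrightarrow> m \<le> q (x + t *\<^sub>R a) - t * q a" for m x
    unfolding qa_def using that by (intro cINF_greatest) auto
  show "qa x \<le> q x" for x using low[of 0 x] by simp
  show "qa (- a) \<le> - q a" using low[of 1 "- a"] sublin_0[OF q] by simp
  show "sublin qa" unfolding sublin_def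
  proof (intro conjI allI impI)
    fix x y
    have "qa (x + y) - (q (y + s *\<^sub>R a) - s * q a) \<le> q (x + t *\<^sub>R a) - t * q a"
      if "t \<ge> 0" "s \<ge> 0" for t s
    proof -
      have "qa (x + y) \<le> q ((x + y) + (t + s) *\<^sub>R a) - (t + s) * q a" using low that by simp
      also have "(x + y) + (t + s) *\<^sub>R a = (x + t *\<^sub>R a) + (y + s *\<^sub>R a)"
        by (simp add: algebra_simps)
      finally show ?thesis using sublin_add[OF q, of "x + t *\<^sub>R a" "y + s *\<^sub>R a"]
        by (simp add: algebra_simps)
    qed
    then have "qa (x + y) - (q (y + s *\<^sub>R a) - s * q a) \<le> qa x" if "s \<ge> 0" for s
      using that by (intro grt) auto
    then have "qa (x + y) - qa x \<le> q (y + s *\<^sub>R a) - s * q a" if "s \<ge> 0" for s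
      using that by force
    then have "qa (x + y) - qa x \<le> qa y" by (intro grt) auto
    then show "qa (x + y) \<le> qa x + qa y" by simp
  next
    fix c :: real and x assume c: "c > 0"
    have "qa (c *\<^sub>R x) / c \<le> q (x + t *\<^sub>R a) - t * q a" if "t \<ge> 0" for t
    proof -
      have "qa (c *\<^sub>R x) \<le> q (c *\<^sub>R x + (c * t) *\<^sub>R a) - (c * t) * q a"
        using low[of "c * t"] that c by simp
      also have "c *\<^sub>R x + (c * t) *\<^sub>R a = c *\<^sub>R (x + t *\<^sub>R a)" by (simp add: algebra_simps)
      finally show ?thesis using sublin_scale[OF q c, of "x + t *\<^sub>R a"] c
        by (simp add: field_simps)
    qed
    then have 1: "qa (c *\<^sub>R x) / c \<le> qa x" by (intro grt) auto
    have "c * qa x \<le> q (c *\<^sub>R x + t *\<^sub>R a) - t * q a" if "t \<ge> 0" for t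
    proof -
      have "c * qa x \<le> c * (q (x + (t / c) *\<^sub>R a) - (t / c) * q a)"
        using low[of "t / c" x] that c by simp
      also have "\<dots> = q (c *\<^sub>R (x + (t / c) *\<^sub>R a)) - t * q a"
        using sublin_scale[OF q c, of "x + (t / c) *\<^sub>R a"] c by (simp add: field_simps)
      also have "c *\<^sub>R (x + (t / c) *\<^sub>R a) = c *\<^sub>R x + t *\<^sub>R a" using c by (simp add: algebra_simps)
      finally show ?thesis .
    qed
    then have 2: "c * qa x \<le> qa (c *\<^sub>R x)" by (intro grt) auto
    from 1 2 c show "qa (c *\<^sub>R x) = c * qa x" by (simp add: field_simps)
  qed
qed

lemma sublin_minimal_linear:
  fixes m :: "'v::real_vector \<Rightarrow> real"
  assumes m: "sublin m" and min: "\<And>q. sublin q \<Longrightarrow> (\<forall>x. q x \<le> m x) \<Longrightarrow> q = m"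
  shows "linear m"
proof -
  have neg: "m (- a) = - m a" for a
  proof -
    define qa where "qa = (\<lambda>x. INF t\<in>{0::real..}. m (x + t *\<^sub>R a) - t * m a)"
    have "qa = m"
      by (rule min) (use sublin_shift(1,2)[OF m, where a=a] in \<open>auto simp: qa_def\<close>)
    then have "qa (- a) = m (- a)" by simp
    then have "m (- a) \<le> - m a" using sublin_shift(3)[OF m, where a=a] unfolding qa_def by simp
    with sublin_neg[OF m, of a] show ?thesis by simp
  qed
  show ?thesis
  proof (rule linearI)
    fix x y
    have "m (- x) + m (- y) \<ge> m (- (x + y))" using sublin_add[OF m, of "- x" "- y"] by simp
    then show "m (x + y) = m x + m y" using sublin_add[OF m, of x y] neg[of x] neg[of y] neg[of "x+y"]
      by simp
  next
    fix r :: real and b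
    show "m (r *\<^sub>R b) = r *\<^sub>R m b"
    proof (cases "r \<ge> 0")
      case True then show ?thesis using sublin_scale0[OF m True] by simp
    next
      case False
      then have "m (r *\<^sub>R b) = m (- ((- r) *\<^sub>R b))" by simp
      also have "\<dots> = - ((- r) * m b)" using neg sublin_scale0[OF m, of "- r"] False by simp
      finally show ?thesis by simp
    qed
  qed
qed

lemma hahn_banach_sublin:
  fixes p :: "'v::real_vector \<Rightarrow> real"
  assumes p: "sublin p"
  shows "\<exists>F. linear F \<and> (\<forall>x. F x \<le> p x)"
proof -
  define r where "r = {(q1, q2). sublin q1 \<and> sublin q2 \<and> (\<forall>x. q1 x \<le> p x) \<and> (\<forall>x. q2 x \<le> q1 x)}"
  have F: "Field r = {q. sublin q \<and> (\<forall>x. q x \<le> p x)}"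
  proof (intro equalityI subsetI)
    fix q assume "q \<in> Field r"
    then consider q' where "(q, q') \<in> r" | q' where "(q', q) \<in> r" unfolding Field_def by blast
    then show "q \<in> {q. sublin q \<and> (\<forall>x. q x \<le> p x)}"
    proof cases
      case 1 then show ?thesis by (simp add: r_def)
    next
      case 2 then show ?thesis unfolding r_def using order_trans by fastforce
    qed
  next
    fix q assume "q \<in> {q. sublin q \<and> (\<forall>x. q x \<le> p x)}"
    then have "(q, q) \<in> r" by (simp add: r_def)
    then show "q \<in> Field r" unfolding Field_def by blast
  qed
  have po: "Partial_order r"
    unfolding partial_order_on_def preorder_on_def refl_on_def trans_def antisym_def F
  proof (intro conjI allI impI ballI subsetI)
    fix z assume "z \<in> r" then show "z \<in> {q. sublin q \<and> (\<forall>x. q x \<le> p x)} \<times> {q. sublin q \<and> (\<forall>x. q x \<le> p x)}"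
      unfolding r_def using order_trans by fastforce
  next
    fix q assume "q \<in> {q. sublin q \<and> (\<forall>x. q x \<le> p x)}" then show "(q, q) \<in> r" by (simp add: r_def)
  next
    fix x y z assume "(x, y) \<in> r" "(y, z) \<in> r" then show "(x, z) \<in> r"
      unfolding r_def using order_trans by fastforce
  next
    fix x y assume "(x, y) \<in> r" "(y, x) \<in> r" then show "x = y"
      unfolding r_def by (auto intro!: ext intro: order_antisym)
  qed
  have ub: "\<exists>u\<in>Field r. \<forall>a\<in>C. (a, u) \<in> r" if C: "C \<in> Chains r" for C
  proof (cases "C = {}")
    case True then show ?thesis using p by (auto simp: F)
  next
    case False
    have CF: "q \<in> Field r" if "q \<in> C" for q
      using C that unfolding Chains_def Field_def by blast
    then have Cs: "sublin q" "\<And>x. q x \<le> p x" if "q \<in> C" for q using that by (auto simp: F)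
    have lb: "- p (- x) \<le> q x" if "q \<in> C" for q x
      using sublin_neg[OF Cs(1)[OF that], of x] Cs(2)[OF that, of "- x"] by simp
    have ch: "(\<forall>x. q1 x \<le> q2 x) \<or> (\<forall>x. q2 x \<le> q1 x)" if "q1 \<in> C" "q2 \<in> C" for q1 q2
      using C that unfolding Chains_def r_def by blast
    have I1: "sublin (\<lambda>x. INF q\<in>C. q x)"
      by (rule sublin_chain_inf(1)[where C=C and b="\<lambda>x. - p (- x)"]) (use False Cs(1) lb ch in blast)+
    have I2: "(INF q\<in>C. q x) \<le> q x" if "q \<in> C" for q x
      by (rule sublin_chain_inf(2)[where C=C and b="\<lambda>x. - p (- x)"]) (use False Cs(1) lb ch that in blast)+
    note I = I1 I2
    obtain q0 where q0: "q0 \<in> C" using False by blast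
    have uF: "(\<lambda>x. INF q\<in>C. q x) \<in> Field r" unfolding F
      using I(1) I(2)[OF q0] Cs(2)[OF q0] by (auto intro: order_trans)
    show ?thesis
    proof (rule bexI[OF _ uF], intro ballI)
      fix a assume a: "a \<in> C"
      show "(a, \<lambda>x. INF q\<in>C. q x) \<in> r" unfolding r_def
        using Cs[OF a] I1 I2[OF a] by simp
    qed
  qed
  obtain m where m: "m \<in> Field r" "\<And>a. a \<in> Field r \<Longrightarrow> (m, a) \<in> r \<Longrightarrow> a = m"
    using Zorns_po_lemma[OF po ub] by blast
  have ms: "sublin m" "\<And>x. m x \<le> p x" using m(1) by (auto simp: F)
  have "linear m"
  proof (rule sublin_minimal_linear[OF ms(1)])
    fix q assume "sublin q" "\<forall>x. q x \<le> m x"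
    moreover then have "q \<in> Field r" using ms by (auto simp: F intro: order_trans)
    ultimately show "q = m" using m ms by (auto simp: r_def)
  qed
  then show ?thesis using ms by blast
qed

lemma infdist_approx:
  assumes "E \<noteq> {}" "e > 0" shows "\<exists>y\<in>E. dist x y < infdist x E + e"
proof -
  have "bdd_below ((\<lambda>a. dist x a) ` E)" by (auto intro!: bdd_belowI[of _ 0])
  moreover have "(INF a\<in>E. dist x a) < infdist x E + e" using assms infdist_notempty[OF assms(1), of x] by simp
  ultimately show ?thesis using cINF_less_iff[OF assms(1)] by blast
qed

lemma infdist_convex:
  fixes E :: "'v::real_normed_vector set"
  assumes E: "convex E" "E \<noteq> {}" and u: "0 \<le> u" "u \<le> 1"
  shows "infdist (u *\<^sub>R x + (1 - u) *\<^sub>R y) E \<le> u * infdist x E + (1 - u) * infdist y E"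
proof (rule field_le_epsilon)
  fix e :: real assume e: "e > 0"
  obtain e1 where e1: "e1 \<in> E" "dist x e1 < infdist x E + e" using infdist_approx[OF E(2) e] by blast
  obtain e2 where e2: "e2 \<in> E" "dist y e2 < infdist y E + e" using infdist_approx[OF E(2) e] by blast
  have m: "u *\<^sub>R e1 + (1 - u) *\<^sub>R e2 \<in> E" using E(1) e1(1) e2(1) u unfolding convex_def by auto
  have "infdist (u *\<^sub>R x + (1 - u) *\<^sub>R y) E \<le> dist (u *\<^sub>R x + (1 - u) *\<^sub>R y) (u *\<^sub>R e1 + (1 - u) *\<^sub>R e2)"
    using infdist_le[OF m] .
  also have "\<dots> = norm (u *\<^sub>R (x - e1) + (1 - u) *\<^sub>R (y - e2))"
    by (simp add: dist_norm algebra_simps)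
  also have "\<dots> \<le> norm (u *\<^sub>R (x - e1)) + norm ((1 - u) *\<^sub>R (y - e2))" by (rule norm_triangle_ineq)
  also have "\<dots> = u * dist x e1 + (1 - u) * dist y e2" using u by (simp add: dist_norm)
  also have "\<dots> \<le> u * (infdist x E + e) + (1 - u) * (infdist y E + e)"
    using e1(2) e2(2) u by (intro add_mono mult_left_mono) auto
  also have "\<dots> = u * infdist x E + (1 - u) * infdist y E + e" by (simp add: algebra_simps)
  finally show "infdist (u *\<^sub>R x + (1 - u) *\<^sub>R y) E \<le> u * infdist x E + (1 - u) * infdist y E + e" .
qed

lemma harm_aux:
  fixes t s A B :: real assumes t: "t > 0" and s: "s > 0"
  shows "((s / (t + s)) * A + (1 - s / (t + s)) * B) / (t * s / (t + s)) = A / t + B / s"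
proof -
  have ts: "t + s \<noteq> 0" using assms by simp
  have "1 - s / (t + s) = t / (t + s)" using ts by (simp add: field_simps)
  then have "(s / (t + s)) * A + (1 - s / (t + s)) * B = (s * A + t * B) / (t + s)"
    by (simp add: add_divide_distrib)
  moreover have "x / (t + s) / (t * s / (t + s)) = x / (t * s)" for x using ts by simp
  moreover have "(s * A + t * B) / (t * s) = A / t + B / s" using t s by (simp add: add_divide_distrib)
  ultimately show ?thesis by metis
qed
lemma separation_normed:
  fixes E :: "'v::real_normed_vector set"
  assumes E: "convex E" "E \<noteq> {}" and pos: "0 < infdist a E"
  shows "\<exists>F. linear F \<and> (\<forall>y. \<bar>F y\<bar> \<le> norm y) \<and> (\<forall>e\<in>E. F e \<le> F a - infdist a E)"
proof -
  define g where "g y = infdist y E" for y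
  define D where "D y t = (g (a + t *\<^sub>R y) - g a) / t" for y t
  define p where "p y = (INF t\<in>{0::real<..}. D y t)" for y
  have Dlb: "- norm y \<le> D y t" if "t > 0" for y t
  proof -
    have "\<bar>g (a + t *\<^sub>R y) - g a\<bar> \<le> dist (a + t *\<^sub>R y) a" unfolding g_def by (rule infdist_triangle_abs)
    also have "\<dots> = t * norm y" using that by (simp add: dist_norm)
    finally show ?thesis using that unfolding D_def by (simp add: field_simps abs_le_iff)
  qed
  have bdd: "bdd_below ((\<lambda>t. D y t) ` {0<..})" for y using Dlb by (auto intro!: bdd_belowI)
  have low: "p y \<le> D y t" if "t > 0" for y t unfolding p_def using cINF_lower[OF bdd, of t y] that by simp
  have grt: "m \<le> p y" if "\<And>t. t > 0 \<Longrightarrow> m \<le> D y t" for m y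
    unfolding p_def using that by (intro cINF_greatest) auto
  have conv: "g (u *\<^sub>R x + (1 - u) *\<^sub>R y) \<le> u * g x + (1 - u) * g y" if "0 \<le> u" "u \<le> 1" for u x y
    unfolding g_def using infdist_convex[OF E that] .
  have psub: "sublin p" unfolding sublin_def
  proof (intro conjI allI impI)
    fix y z
    have key: "p (y + z) \<le> D y t + D z s" if t: "t > 0" and s: "s > 0" for t s
    proof -
      define r where "r = t * s / (t + s)"
      define u where "u = s / (t + s)"
      have r: "r > 0" using t s by (simp add: r_def)
      have u: "0 \<le> u" "u \<le> 1" "1 - u = t / (t + s)" using t s by (auto simp: u_def field_simps)
      have eq: "a + r *\<^sub>R (y + z) = u *\<^sub>R (a + t *\<^sub>R y) + (1 - u) *\<^sub>R (a + s *\<^sub>R z)"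
      proof -
        have "u *\<^sub>R (a + t *\<^sub>R y) + (1 - u) *\<^sub>R (a + s *\<^sub>R z)
              = a + (u * t) *\<^sub>R y + ((1 - u) * s) *\<^sub>R z" by (simp add: algebra_simps)
        also have "\<dots> = a + r *\<^sub>R y + r *\<^sub>R z"
        proof -
          have "u * t = r" "(1 - u) * s = r" using t s by (auto simp: u r_def u_def field_simps)
          then show ?thesis by simp
        qed
        finally show ?thesis by (simp add: scaleR_right_distrib add.assoc)
      qed
      have "g (a + r *\<^sub>R (y + z)) \<le> u * g (a + t *\<^sub>R y) + (1 - u) * g (a + s *\<^sub>R z)"
        unfolding eq using conv[OF u(1,2)] .
      then have "g (a + r *\<^sub>R (y + z)) - g a \<le> u * (g (a + t *\<^sub>R y) - g a) + (1 - u) * (g (a + s *\<^sub>R z) - g a)"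
        by (simp add: algebra_simps)
      then have "(g (a + r *\<^sub>R (y + z)) - g a) / r \<le> (u * (g (a + t *\<^sub>R y) - g a) + (1 - u) * (g (a + s *\<^sub>R z) - g a)) / r"
        using r by (simp add: divide_right_mono)
      also have "\<dots> = D y t + D z s" unfolding D_def r_def u_def by (rule harm_aux[OF t s])
      finally have "D (y + z) r \<le> D y t + D z s" unfolding D_def .
      then show ?thesis using low[OF r, of "y + z"] by linarith
    qed
    have "p (y + z) - D z s \<le> p y" if "s > 0" for s
      using key[OF _ that] by (intro grt) (simp add: algebra_simps)
    then have "p (y + z) - p y \<le> D z s" if "s > 0" for s using that by force
    then have "p (y + z) - p y \<le> p z" by (intro grt) auto
    then show "p (y + z) \<le> p y + p z" by simp
  next
    fix c :: real and y assume c: "c > 0"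
    have Dc: "D (c *\<^sub>R y) t = c * D y (c * t)" if "t > 0" for t
      unfolding D_def using c that by (simp add: field_simps)
    have "p (c *\<^sub>R y) / c \<le> D y s" if "s > 0" for s
    proof -
      have "p (c *\<^sub>R y) \<le> D (c *\<^sub>R y) (s / c)" using low c that by simp
      also have "\<dots> = c * D y s" using Dc[of "s / c"] c that by simp
      finally show ?thesis using c by (simp add: field_simps)
    qed
    then have 1: "p (c *\<^sub>R y) / c \<le> p y" by (intro grt) auto
    have "c * p y \<le> D (c *\<^sub>R y) t" if "t > 0" for t
      using Dc[OF that] low[of "c * t" y] c that by simp
    then have 2: "c * p y \<le> p (c *\<^sub>R y)" by (intro grt) auto
    from 1 2 c show "p (c *\<^sub>R y) = c * p y" by (simp add: field_simps)
  qed
  obtain F where F: "linear F" "\<And>x. F x \<le> p x" using hahn_banach_sublin[OF psub] by blast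
  have up: "F y \<le> g (a + y) - g a" for y using F(2)[of y] low[of 1 y] unfolding D_def by simp
  have nb: "F y \<le> norm y" for y using F(2)[of y] low[of 1 y] unfolding D_def
    using infdist_triangle_abs[of "a + y" E a] unfolding g_def by (simp add: dist_norm abs_le_iff)
  have "\<bar>F y\<bar> \<le> norm y" for y using nb[of y] nb[of "- y"] linear_neg[OF F(1), of y] by simp
  moreover have "F e \<le> F a - infdist a E" if "e \<in> E" for e
    using up[of "e - a"] linear_diff[OF F(1), of e a] that unfolding g_def by simp
  ultimately show ?thesis using F(1) by blast
qed



lemma lin_decomp:
  fixes G :: "(('a::real_normed_vector \<times> 'b::real_normed_vector) \<times> real) \<Rightarrow> real"
  assumes "linear G"
  shows "G ((x, y), s) = G ((x, 0), 0) + G ((0, y), 0) + s * G ((0, 0), 1)"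
proof -
  have eq: "((x, y), s) = ((x, 0), 0) + ((0, y), 0) + s *\<^sub>R ((0, 0), (1::real))" by simp
  have "G (((x, 0), 0) + ((0, y), 0) + s *\<^sub>R ((0, 0), (1::real))) = G ((x, 0), 0) + G ((0, y), 0) + s * G ((0, 0), 1)"
    by (simp only: linear_add[OF assms] linear_scale[OF assms] real_scaleR_def)
  with eq show ?thesis by metis
qed

lemma lin_fst_bl:
  fixes G :: "(('a::real_normed_vector \<times> 'b::real_normed_vector) \<times> real) \<Rightarrow> real"
  assumes G: "linear G" "\<And>y. \<bar>G y\<bar> \<le> M * norm y" and c: "c > 0"
  shows "bounded_linear (\<lambda>x. G ((x, 0), 0) / c)" "bounded_linear (\<lambda>y. G ((0, y), 0) / c)"
proof -
  show "bounded_linear (\<lambda>x. G ((x, 0), 0) / c)"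
  proof (rule bounded_linear_intro[where K="M / c"])
    fix x x' :: 'a
    show "G ((x + x', 0), 0) / c = G ((x, 0), 0) / c + G ((x', 0), 0) / c"
      using linear_add[OF G(1), of "((x, 0), 0)" "((x', 0), 0)"] by (simp add: add_divide_distrib)
  next
    fix r :: real and x :: 'a
    show "G ((r *\<^sub>R x, 0), 0) / c = r *\<^sub>R (G ((x, 0), 0) / c)"
      using linear_scale[OF G(1), of r "((x, 0), 0)"] by simp
  next
    fix x :: 'a
    have "\<bar>G ((x, 0), 0)\<bar> \<le> M * norm x" using G(2)[of "((x, 0), 0)"] by (simp add: norm_Pair)
    then show "norm (G ((x, 0), 0) / c) \<le> norm x * (M / c)" using c by (simp add: field_simps)
  qed
  show "bounded_linear (\<lambda>y. G ((0, y), 0) / c)"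
  proof (rule bounded_linear_intro[where K="M / c"])
    fix x x' :: 'b
    show "G ((0, x + x'), 0) / c = G ((0, x), 0) / c + G ((0, x'), 0) / c"
      using linear_add[OF G(1), of "((0, x), 0)" "((0, x'), 0)"] by (simp add: add_divide_distrib)
  next
    fix r :: real and x :: 'b
    show "G ((0, r *\<^sub>R x), 0) / c = r *\<^sub>R (G ((0, x), 0) / c)"
      using linear_scale[OF G(1), of r "((0, x), 0)"] by simp
  next
    fix x :: 'b
    have "\<bar>G ((0, x), 0)\<bar> \<le> M * norm x" using G(2)[of "((0, x), 0)"] by (simp add: norm_Pair)
    then show "norm (G ((0, x), 0) / c) \<le> norm x * (M / c)" using c by (simp add: field_simps)
  qed
qed

lemma conj_bound:
  fixes h :: "'a::banach \<times> ('a \<Rightarrow>\<^sub>L real) \<Rightarrow> ereal"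
    and G :: "(('a \<times> ('a \<Rightarrow>\<^sub>L real)) \<times> real) \<Rightarrow> real"
  assumes prp: "proper_fun h"
    and Lh: "\<And>ys. ys \<in> fst ` edom (fconj h) \<Longrightarrow> norm ys \<le> L"
    and G: "linear G" "\<And>y. \<bar>G y\<bar> \<le> M * norm y" and mu: "G ((0, 0), 1) = - \<mu>" "\<mu> > 0"
    and C: "\<And>z t. h z \<le> ereal t \<Longrightarrow> G (z, t) \<le> C"
  shows "\<bar>G ((x, 0), 0)\<bar> \<le> \<mu> * L * norm x"
proof -
  note bl = lin_fst_bl[OF G mu(2)]
  define us where "us = Blinfun (\<lambda>x. G ((x, 0), 0) / \<mu>)"
  define uss where "uss = Blinfun (\<lambda>y. G ((0, y), 0) / \<mu>)"
  have us: "blinfun_apply us x = G ((x, 0), 0) / \<mu>" for x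
    unfolding us_def using bounded_linear_Blinfun_apply[OF bl(1)] by simp
  have uss: "blinfun_apply uss y = G ((0, y), 0) / \<mu>" for y
    unfolding uss_def using bounded_linear_Blinfun_apply[OF bl(2)] by simp
  have "fconj h (us, uss) \<le> ereal (C / \<mu>)"
    unfolding fconj_def
  proof (simp only: case_prod_conv, rule SUP_least)
    fix p :: "'a \<times> ('a \<Rightarrow>\<^sub>L real)"
    show "ereal (blinfun_apply us (fst p) + blinfun_apply uss (snd p)) - h p \<le> ereal (C / \<mu>)"
    proof (cases "h p")
      case (real c)
      then have "G (p, c) \<le> C" using C by simp
      moreover have "G (p, c) = G ((fst p, 0), 0) + G ((0, snd p), 0) + c * G ((0, 0), 1)"
        using lin_decomp[OF G(1), of "fst p" "snd p" c] by simp
      ultimately have "\<mu> * (blinfun_apply us (fst p) + blinfun_apply uss (snd p)) - \<mu> * c \<le> C"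
        using mu by (simp add: us uss algebra_simps)
      then have "blinfun_apply us (fst p) + blinfun_apply uss (snd p) - c \<le> C / \<mu>"
        using mu(2) by (simp add: field_simps)
      then show ?thesis using real by simp
    next
      case PInf then show ?thesis by simp
    next
      case MInf then show ?thesis using prp unfolding proper_fun_def by (metis MInfty_eq_minfinity less_irrefl)
    qed
  qed
  then have "us \<in> fst ` edom (fconj h)" unfolding edom_def
    by (intro image_eqI[where x="(us, uss)"]) (auto simp: le_less_trans)
  then have "norm us \<le> L" using Lh by blast
  then have "\<bar>blinfun_apply us x\<bar> \<le> L * norm x"
    using norm_blinfun[of us x] by (metis mult_right_mono norm_ge_zero order_trans real_norm_def)
  then show ?thesis using mu(2) by (simp add: us abs_div field_simps)
qed

theorem corollary3p7:
  fixes h :: "'a::banach \<times> ('a \<Rightarrow>\<^sub>L real) \<Rightarrow> ereal"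
    and L :: real
  assumes "L \<ge> 0"
    and "proper_fun h" and "elsc h" and "econvex h"
    and "\<And>x xs. h (x, xs) \<ge> ereal (blinfun_apply xs x)"
    and "\<And>ys. ys \<in> fst ` edom (fconj h) \<Longrightarrow> norm ys \<le> L"
  shows "(\<forall>xs \<in> snd ` edom h. (\<forall>x. \<bar>h (x, xs)\<bar> \<noteq> \<infinity>)
            \<and> L-lipschitz_on UNIV (\<lambda>x. real_of_ereal (h (x, xs))))
       \<and> edom h = UNIV \<times> snd ` edom h
       \<and> edom h \<subseteq> UNIV \<times> {xs. norm xs \<le> L}
       \<and> (\<forall>xs \<in> snd ` edom h. norm xs \<le> L)
       \<and> fst ` edom h = UNIV"
proof -
  note L0 = assms(1) and prp = assms(2) and lsc = assms(3) and cvx = assms(4)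
    and cpl = assms(5) and Lh = assms(6)
  define E where "E = {(z, t::real). h z \<le> ereal t}"
  have convE: "convex E" using cvx unfolding econvex_def E_def .
  have hm: "h z \<noteq> - \<infinity>" for z using prp unfolding proper_fun_def by (metis less_irrefl)
  obtain z0 where "h z0 \<noteq> \<infinity>" using prp unfolding proper_fun_def by blast
  then obtain c0 where c0: "h z0 = ereal c0" using hm[of z0] by (cases "h z0") auto
  have "(z0, c0) \<in> E" using c0 unfolding E_def by simp
  then have Ene: "E \<noteq> {}" by blast
  have dist_pos: "0 < infdist (z1, r) E" if r: "ereal r < h z1" for z1 r
  proof -
    obtain r' where r': "ereal r < ereal r'" "ereal r' < h z1" using ereal_dense2[OF r] by blast
    have "closed {z. h z \<le> ereal r'}" using lsc unfolding elsc_def by blast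
    then have "open (- {z. h z \<le> ereal r'})" by (simp add: open_Compl)
    moreover have "z1 \<in> - {z. h z \<le> ereal r'}" using r' by auto
    ultimately obtain \<epsilon> where eps: "\<epsilon> > 0" "ball z1 \<epsilon> \<subseteq> - {z. h z \<le> ereal r'}"
      using open_contains_ball by blast
    define \<delta> where "\<delta> = min \<epsilon> (r' - r)"
    have dpos: "\<delta> > 0" using eps r' unfolding \<delta>_def by simp
    have "\<delta> \<le> dist (z1, r) e" if e: "e \<in> E" for e
    proof -
      obtain z s where zs: "e = (z, s)" "h z \<le> ereal s" using e unfolding E_def by auto
      have d1: "dist z1 z \<le> dist (z1, r) e" "dist r s \<le> dist (z1, r) e"
        using dist_fst_le[of "(z1, r)" e] dist_snd_le[of "(z1, r)" e] zs by auto
      show ?thesis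
      proof (cases "dist z1 z < \<epsilon>")
        case True
        then have "\<not> h z \<le> ereal r'" using eps(2) by auto
        then have "ereal r' < ereal s" using zs(2) by (meson not_le le_less_trans)
        then have "r' - r \<le> dist r s" using r' by (simp add: dist_real_def)
        then show ?thesis using d1 unfolding \<delta>_def by linarith
      next
        case False then show ?thesis using d1 unfolding \<delta>_def by linarith
      qed
    qed
    then have "\<delta> \<le> infdist (z1, r) E"
      unfolding infdist_notempty[OF Ene] by (intro cINF_greatest[OF Ene]) auto
    then show ?thesis using dpos by linarith
  qed
  note sep = separation_normed[OF convE Ene dist_pos]
  have inE: "h z \<le> ereal t \<Longrightarrow> (z, t) \<in> E" for z t unfolding E_def by simp
  \<comment> \<open>Step 1: a functional V in the domain of the conjugate\<close>
  obtain V where V: "linear V" "\<And>y. \<bar>V y\<bar> \<le> norm y"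
    "\<And>e. e \<in> E \<Longrightarrow> V e \<le> V (z0, c0 - 1) - infdist (z0, c0 - 1) E"
    using sep[of "c0 - 1" z0] c0 by auto
  define C1 where "C1 = V (z0, c0 - 1) - infdist (z0, c0 - 1) E"
  define \<beta>1 where "\<beta>1 = V ((0, 0), 1)"
  have "0 < infdist (z0, c0 - 1) E" using dist_pos[of "c0 - 1" z0] c0 by simp
  moreover have "V (z0, c0) \<le> C1" using V(3)[of "(z0, c0)"] inE[of z0 c0] c0 unfolding C1_def by simp
  moreover have "V (z0, c0) = V (z0, c0 - 1) + \<beta>1"
    using lin_decomp[OF V(1), of "fst z0" "snd z0" c0] lin_decomp[OF V(1), of "fst z0" "snd z0" "c0 - 1"]
    unfolding \<beta>1_def by (simp add: algebra_simps)
  ultimately have b1: "\<beta>1 < 0" unfolding C1_def by linarith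
  have VC: "V e \<le> C1" if "e \<in> E" for e using V(3)[OF that] unfolding C1_def .
  have A: "h (x, xs) \<le> ereal (c + L * norm (x - x0))" if hc: "h (x0, xs) = ereal c" for x0 xs c x
  proof (rule ccontr)
    define r where "r = c + L * norm (x - x0)"
    assume "\<not> h (x, xs) \<le> ereal (c + L * norm (x - x0))"
    then have rl: "ereal r < h (x, xs)" unfolding r_def by simp
    obtain W where W: "linear W" "\<And>y. \<bar>W y\<bar> \<le> norm y"
      "\<And>e. e \<in> E \<Longrightarrow> W e \<le> W ((x, xs), r) - infdist ((x, xs), r) E"
      using sep[OF rl] by blast
    define \<delta> where "\<delta> = infdist ((x, xs), r) E"
    have dp: "\<delta> > 0" using dist_pos[OF rl] unfolding \<delta>_def .
    define M where "M = W ((x, xs), r)"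
    define \<beta> where "\<beta> = W ((0, 0), 1)"
    have WE: "W e \<le> M - \<delta>" if "e \<in> E" for e using W(3)[OF that] unfolding M_def \<delta>_def .
    have Wdec: "W ((x0, xs), s) = W ((x0, xs), 0) + s * \<beta>" for s
      using lin_decomp[OF W(1), of x0 xs s] lin_decomp[OF W(1), of x0 xs 0] unfolding \<beta>_def by simp
    have b: "\<beta> \<le> 0"
    proof (rule ccontr)
      assume "\<not> \<beta> \<le> 0"
      then have bp: "\<beta> > 0" by simp
      define s where "s = max c ((M - W ((x0, xs), 0)) / \<beta> + 1)"
      have "h (x0, xs) \<le> ereal s" using hc unfolding s_def by simp
      then have "W ((x0, xs), s) \<le> M - \<delta>" using WE inE by blast
      moreover have "s * \<beta> \<ge> M - W ((x0, xs), 0) + \<beta>"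
      proof -
        have "s \<ge> (M - W ((x0, xs), 0)) / \<beta> + 1" unfolding s_def by simp
        then have "s * \<beta> \<ge> ((M - W ((x0, xs), 0)) / \<beta> + 1) * \<beta>" using bp by (simp add: mult_right_mono)
        moreover have "((M - W ((x0, xs), 0)) / \<beta> + 1) * \<beta> = M - W ((x0, xs), 0) + \<beta>"
          using bp by (simp add: field_simps)
        ultimately show ?thesis by linarith
      qed
      ultimately show False using Wdec[of s] dp bp by linarith
    qed
    define lam where "lam = max 0 ((C1 - V ((x, xs), r)) / \<delta> + 1)"
    have lam: "lam \<ge> 0" "lam * \<delta> > C1 - V ((x, xs), r)"
    proof -
      show "lam \<ge> 0" unfolding lam_def by simp
      have "lam \<ge> (C1 - V ((x, xs), r)) / \<delta> + 1" unfolding lam_def by simp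
      then have "lam * \<delta> \<ge> ((C1 - V ((x, xs), r)) / \<delta> + 1) * \<delta>" using dp by (simp add: mult_right_mono)
      moreover have "((C1 - V ((x, xs), r)) / \<delta> + 1) * \<delta> = C1 - V ((x, xs), r) + \<delta>"
        using dp by (simp add: field_simps)
      ultimately show "lam * \<delta> > C1 - V ((x, xs), r)" using dp by linarith
    qed
    define G where "G y = V y + lam * W y" for y
    define \<mu> where "\<mu> = - \<beta>1 - lam * \<beta>"
    have mu: "\<mu> > 0" unfolding \<mu>_def using b1 mult_nonneg_nonpos[OF lam(1) b] by linarith
    have Glin: "linear G" unfolding G_def
      using V(1) W(1) by (intro linearI) (simp_all add: linear_add linear_scale algebra_simps)
    have Gb: "\<bar>G y\<bar> \<le> (1 + lam) * norm y" for y
    proof -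
      have "\<bar>G y\<bar> \<le> \<bar>V y\<bar> + lam * \<bar>W y\<bar>" unfolding G_def using lam(1) by (simp add: abs_mult abs_triangle_ineq order_trans[OF abs_triangle_ineq])
      also have "\<dots> \<le> norm y + lam * norm y" using V(2) W(2) lam(1) by (intro add_mono mult_left_mono) auto
      finally show ?thesis by (simp add: algebra_simps)
    qed
    have Gmu: "G ((0, 0), 1) = - \<mu>" unfolding G_def \<mu>_def \<beta>1_def \<beta>_def by simp
    have GC: "G (z, t) \<le> C1 + lam * (M - \<delta>)" if "h z \<le> ereal t" for z t
    proof -
      have "(z, t) \<in> E" using inE that .
      then show ?thesis unfolding G_def using VC WE lam(1) by (simp add: add_mono mult_left_mono)
    qed
    have bnd: "\<bar>G ((x - x0, 0), 0)\<bar> \<le> \<mu> * L * norm (x - x0)"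
      by (rule conj_bound[OF prp Lh Glin Gb Gmu mu GC])
    have GQ: "G ((x0, xs), c) \<le> C1 + lam * (M - \<delta>)" using GC hc by simp
    have GP: "G ((x, xs), r) = V ((x, xs), r) + lam * M" unfolding G_def M_def by simp
    have diff: "G ((x, xs), r) - G ((x0, xs), c) = G ((x - x0, 0), 0) - \<mu> * (r - c)"
    proof -
      have "G ((x, xs), r) - G ((x0, xs), c) = G (((x, xs), r) - ((x0, xs), c))"
        using linear_diff[OF Glin, of "((x, xs), r)" "((x0, xs), c)"] by simp
      also have "((x, xs), r) - ((x0, xs), c) = ((x - x0, 0), r - c)" by simp
      also have "G \<dots> = G ((x - x0, 0), 0) + G ((0, 0), 0) + (r - c) * G ((0, 0), 1)"
        by (rule lin_decomp[OF Glin])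
      moreover have "G ((0, 0), 0) = 0" using linear_0[OF Glin] by (simp add: zero_prod_def)
      ultimately show ?thesis using Gmu by (simp add: algebra_simps)
    qed
    have "G ((x, xs), r) > G ((x0, xs), c)" using GQ GP lam(2) by (simp add: algebra_simps)
    then have "G ((x - x0, 0), 0) > \<mu> * (r - c)" using diff by linarith
    moreover have "\<mu> * (r - c) = \<mu> * L * norm (x - x0)" unfolding r_def by simp
    ultimately show False using bnd by linarith
  qed
  have fin: "\<bar>h (x, xs)\<bar> \<noteq> \<infinity>" and dom: "(x, xs) \<in> edom h" if xsd: "xs \<in> snd ` edom h" for x xs
  proof -
    obtain p where p: "p \<in> edom h" "xs = snd p" using xsd by blast
    obtain x0 where "h (x0, xs) < \<infinity>" using p unfolding edom_def by (cases p) auto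
    then obtain c where hc: "h (x0, xs) = ereal c" using hm[of "(x0, xs)"] by (cases "h (x0, xs)") auto
    have "h (x, xs) < \<infinity>" by (rule le_less_trans[OF A[OF hc, of x]]) simp
    then show "\<bar>h (x, xs)\<bar> \<noteq> \<infinity>" "(x, xs) \<in> edom h" using hm[of "(x, xs)"] unfolding edom_def by auto
  qed
  have lip: "L-lipschitz_on UNIV (\<lambda>x. real_of_ereal (h (x, xs)))" if xs: "xs \<in> snd ` edom h" for xs
  proof (rule lipschitz_onI)
    show "0 \<le> L" by (rule L0)
    fix x y :: 'a
    have re: "h (z, xs) = ereal (real_of_ereal (h (z, xs)))" for z using fin[OF xs, of z] by (simp add: ereal_real')
    have "h (x, xs) \<le> ereal (real_of_ereal (h (y, xs)) + L * norm (x - y))" by (rule A[OF re])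
    then have 1: "real_of_ereal (h (x, xs)) \<le> real_of_ereal (h (y, xs)) + L * norm (x - y)"
      by (subst (asm) re) simp
    have "h (y, xs) \<le> ereal (real_of_ereal (h (x, xs)) + L * norm (y - x))" by (rule A[OF re])
    then have 2: "real_of_ereal (h (y, xs)) \<le> real_of_ereal (h (x, xs)) + L * norm (y - x)"
      by (subst (asm) re) simp
    show "dist (real_of_ereal (h (x, xs))) (real_of_ereal (h (y, xs))) \<le> L * dist x y"
      using 1 2 by (simp add: dist_real_def dist_norm norm_minus_commute abs_le_iff)
  qed
  have nrm: "norm xs \<le> L" if xs: "xs \<in> snd ` edom h" for xs
  proof -
    obtain p where p: "p \<in> edom h" "xs = snd p" using xs by blast
    obtain x0 where "h (x0, xs) < \<infinity>" using p unfolding edom_def by (cases p) auto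
    then obtain c where hc: "h (x0, xs) = ereal c" using hm[of "(x0, xs)"] by (cases "h (x0, xs)") auto
    define K where "K = \<bar>c\<bar> + L * norm x0"
    have K0: "K \<ge> 0" unfolding K_def using L0 by simp
    have up: "blinfun_apply xs x \<le> K + L * norm x" for x
    proof -
      have "ereal (blinfun_apply xs x) \<le> ereal (c + L * norm (x - x0))" using cpl[where x=x and xs=xs] A[OF hc, of x] by (rule order_trans)
      then have "blinfun_apply xs x \<le> c + L * norm (x - x0)" by simp
      also have "\<dots> \<le> c + L * (norm x + norm x0)" using L0 norm_triangle_ineq4[of x x0] by (simp add: mult_left_mono)
      finally show ?thesis unfolding K_def by (simp add: algebra_simps)
    qed
    have up2: "blinfun_apply xs x \<le> L * norm x" for x
    proof (rule ccontr)
      assume "\<not> blinfun_apply xs x \<le> L * norm x"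
      then have g: "blinfun_apply xs x - L * norm x > 0" by simp
      define t where "t = (K + 1) / (blinfun_apply xs x - L * norm x)"
      have t: "t > 0" unfolding t_def using g K0 by simp
      have "blinfun_apply xs (t *\<^sub>R x) \<le> K + L * norm (t *\<^sub>R x)" by (rule up)
      then have "t * (blinfun_apply xs x - L * norm x) \<le> K" using t by (simp add: blinfun.scaleR_right algebra_simps)
      moreover have "t * (blinfun_apply xs x - L * norm x) = K + 1" unfolding t_def using g by simp
      ultimately show False by simp
    qed
    show ?thesis
    proof (rule norm_blinfun_bound[OF L0])
      fix x
      show "norm (blinfun_apply xs x) \<le> L * norm x"
        using up2[of x] up2[of "- x"] by (simp add: blinfun.minus_right abs_le_iff)
    qed
  qed
  have "z0 \<in> edom h" using c0 unfolding edom_def by simp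
  then have nonempty: "snd ` edom h \<noteq> {}" by blast
  show ?thesis
  proof (intro conjI ballI allI)
    show "\<And>xs x. xs \<in> snd ` edom h \<Longrightarrow> \<bar>h (x, xs)\<bar> \<noteq> \<infinity>" by (rule fin)
    show "\<And>xs. xs \<in> snd ` edom h \<Longrightarrow> L-lipschitz_on UNIV (\<lambda>x. real_of_ereal (h (x, xs)))" by (rule lip)
    show "edom h = UNIV \<times> snd ` edom h"
    proof
      show "edom h \<subseteq> UNIV \<times> snd ` edom h"
      proof
        fix p assume "p \<in> edom h" then show "p \<in> UNIV \<times> snd ` edom h" by (cases p) (force intro: image_eqI)
      qed
      show "UNIV \<times> snd ` edom h \<subseteq> edom h" using dom by auto
    qed
    show "edom h \<subseteq> UNIV \<times> {xs. norm xs \<le> L}"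
    proof
      fix p assume "p \<in> edom h"
      then have "snd p \<in> snd ` edom h" by blast
      then have "norm (snd p) \<le> L" by (rule nrm)
      then show "p \<in> UNIV \<times> {xs. norm xs \<le> L}" by (cases p) auto
    qed
    show "\<And>xs. xs \<in> snd ` edom h \<Longrightarrow> norm xs \<le> L" by (rule nrm)
    show "fst ` edom h = UNIV"
    proof (intro set_eqI iffI)
      fix x :: 'a assume "x \<in> UNIV"
      obtain xs where "xs \<in> snd ` edom h" using nonempty by blast
      then have "(x, xs) \<in> edom h" by (rule dom)
      then show "x \<in> fst ` edom h" by (rule image_eqI[rotated]) simp
    qed simp
  qed
qed

end
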